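(* Let $0\le\lambda\le1$ and let $\varphi$ be as described in the context, with $\varphi(z)=1+B_1z+B_2z^2+\cdots$. If $f(z)=z+\sum_{n\ge2}a_nz^n$ belongs to the class $\mathcal{G}^{\lambda}_{\sigma}(\varphi)$, then \[ |a_2|\le \frac{B_1\sqrt{B_1}}{\sqrt{4B_1+|(3-\lambda)B_1^2-4B_2|}} \] and \[ |a_3|\le\begin{cases}\left(1-\dfrac{4}{3(1+\lambda)B_1}\right)\dfrac{B_1^3}{4B_1+|(3-\lambda)B_1^2-4B_2|}+\dfrac{B_1}{3(1+\lambda)}, & \text{if } B_1\ge \dfrac{4}{3(1+\lambda)},\\[3mm] \dfrac{B_1}{3(1+\lambda)}, & \text{if } B_1< \dfrac{4}{3(1+\lambda)}.\end{cases} \]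
   Context: $\mathbb{U}=\{z\in\mathbb{C}:|z|<1\}$. For analytic $f,g$ on $\mathbb{U}$, $f\prec g$ (subordination) means there is an analytic $w$ on $\mathbb{U}$ with $w(0)=0$, $|w(z)|<1$, and $f(z)=g(w(z))$. The function $\varphi$ is analytic and univalent in $\mathbb{U}$ with positive real part, $\varphi(0)=1$, $\varphi'(0)>0$, $\varphi$ maps $\mathbb{U}$ onto a region starlike with respect to $1$ and symmetric with respect to the real axis; its expansion is $\varphi(z)=1+B_1z+B_2z^2+B_3z^3+\cdots$ with all coefficients real and $B_1>0$. $\sigma$ denotes the class of bi-univalent functions: analytic functions $f(z)=z+\sum_{n\ge2}a_nz^n$ on $\mathbb{U}$ that are univalent in $\mathbb{U}$ and whose inverse $g=f^{-1}$, $g(w)=w-a_2w^2+(2a_2^2-a_3)w^3-(5a_2^3-5a_2a_3+a_4)w^4+\cdots$, is also univalent in $\mathbb{U}$ (i.e. extends univalently to $\mathbb{U}$). For $0\le\lambda\le1$, $\mathcal{G}^{\lambda}_{\sigma}(\varphi)$ is the set of $f\in\sigma$ such that $(1-\lambda)f'(z)+\lambda\left(1+\frac{zf''(z)}{f'(z)}\right)\prec\varphi(z)$ for $z\in\mathbb{U}$ and $(1-\lambda)g'(w)+\lambda\left(1+\frac{wg''(w)}{g'(w)}\right)\prec\varphi(w)$ for $w\in\mathbb{U}$, where $g=f^{-1}$. *)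

theory Defs
  imports "HOL-Analysis.Analysis"
begin

definition unit_disc :: "complex set" where
  "unit_disc = ball 0 1"

definition subordinate :: "(complex \<Rightarrow> complex) \<Rightarrow> (complex \<Rightarrow> complex) \<Rightarrow> bool" where
  "subordinate F G \<longleftrightarrow> (\<exists>w. w holomorphic_on unit_disc \<and> w 0 = 0 \<and>
      (\<forall>z\<in>unit_disc. norm (w z) < 1) \<and> (\<forall>z\<in>unit_disc. F z = G (w z)))"

definition taylor_coeff :: "(complex \<Rightarrow> complex) \<Rightarrow> nat \<Rightarrow> complex" where
  "taylor_coeff f n = (deriv ^^ n) f 0 / of_nat (fact n)"

definition admissible_phi :: "(complex \<Rightarrow> complex) \<Rightarrow> bool" where
  "admissible_phi \<phi> \<longleftrightarrow>
     \<phi> holomorphic_on unit_disc \<and> inj_on \<phi> unit_disc \<and>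
     (\<forall>z\<in>unit_disc. Re (\<phi> z) > 0) \<and> \<phi> 0 = 1 \<and>
     Im (deriv \<phi> 0) = 0 \<and> Re (deriv \<phi> 0) > 0 \<and>
     (\<forall>z\<in>unit_disc. \<forall>t\<in>{0..1::real}. 1 + of_real t * (\<phi> z - 1) \<in> \<phi> ` unit_disc) \<and>
     (\<forall>v\<in>\<phi> ` unit_disc. cnj v \<in> \<phi> ` unit_disc) \<and>
     (\<forall>n. Im (taylor_coeff \<phi> n) = 0)"

definition inverse_ext :: "(complex \<Rightarrow> complex) \<Rightarrow> (complex \<Rightarrow> complex) \<Rightarrow> bool" where
  "inverse_ext f g \<longleftrightarrow> g holomorphic_on unit_disc \<and> inj_on g unit_disc \<and>
      (\<forall>\<^sub>F z in nhds 0. g (f z) = z)"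

definition bi_univalent :: "(complex \<Rightarrow> complex) \<Rightarrow> bool" where
  "bi_univalent f \<longleftrightarrow> f holomorphic_on unit_disc \<and> inj_on f unit_disc \<and>
      f 0 = 0 \<and> deriv f 0 = 1 \<and> (\<exists>g. inverse_ext f g)"

definition G_expr :: "real \<Rightarrow> (complex \<Rightarrow> complex) \<Rightarrow> complex \<Rightarrow> complex" where
  "G_expr lam f z = (1 - of_real lam) * deriv f z
      + of_real lam * (1 + z * deriv (deriv f) z / deriv f z)"

definition class_G :: "real \<Rightarrow> (complex \<Rightarrow> complex) \<Rightarrow> (complex \<Rightarrow> complex) set" where
  "class_G lam \<phi> = {f. bi_univalent f \<and>
      subordinate (G_expr lam f) \<phi> \<and>
      (\<forall>g. inverse_ext f g \<longrightarrow> subordinate (G_expr lam g) \<phi>)}"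

end

theory Submission
  imports Defs "HOL-Complex_Analysis.Complex_Analysis"
begin


lemma deriv_eq_open:
  assumes "open S" "\<And>x. x \<in> S \<Longrightarrow> f x = g x" "z \<in> S"
  shows "deriv f z = deriv g z"
proof (rule deriv_cong_ev[OF _ refl])
  show "eventually (\<lambda>x. f x = g x) (nhds z)"
    using eventually_nhds_in_open[OF assms(1,3)] by (rule eventually_mono) (use assms(2) in auto)
qed

lemma schwarz_coeff:
  assumes holw: "w holomorphic_on ball 0 1" and w0: "w 0 = 0"
    and lt: "\<And>z. z \<in> ball 0 1 \<Longrightarrow> norm (w z) < 1"
  shows "norm (deriv (deriv w) 0) \<le> 2 * (1 - norm (deriv w 0)^2)"
proof -
  have lt': "\<And>z. norm z < 1 \<Longrightarrow> norm (w z) < 1" using lt by simp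
  obtain h where holh: "h holomorphic_on ball 0 1" and eq: "\<And>z. norm z < 1 \<Longrightarrow> w z = z * h z"
      and d0: "deriv w 0 = h 0"
    using Schwarz3[OF holw] w0 by blast
  have le1: "norm (h z) \<le> 1" if z: "norm z < 1" for z
  proof (cases "z = 0")
    case True
    then show ?thesis using Schwarz_Lemma(2)[OF holw w0 lt' z] d0 by simp
  next
    case False
    have "norm (w z) \<le> norm z" using Schwarz_Lemma(1)[OF holw w0 lt' z] .
    then have "norm z * norm (h z) \<le> norm z * 1" using eq[OF z] by (simp add: norm_mult)
    then show ?thesis using False by simp
  qed
  have dh: "\<And>z. z \<in> ball 0 1 \<Longrightarrow> (h has_field_derivative deriv h z) (at z)"
    using holh by (auto intro: holomorphic_derivI)
  have holdh: "deriv h holomorphic_on ball 0 1" using holh by (auto intro: holomorphic_deriv)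
  have ddh: "\<And>z. z \<in> ball 0 1 \<Longrightarrow> (deriv h has_field_derivative deriv (deriv h) z) (at z)"
    using holdh by (auto intro: holomorphic_derivI)
  have dw: "deriv w z = h z + z * deriv h z" if z: "z \<in> ball 0 1" for z
  proof -
    have "((\<lambda>z. z * h z) has_field_derivative (h z + z * deriv h z)) (at z)"
      by (rule derivative_eq_intros dh z refl | simp)+
    then have "(w has_field_derivative (h z + z * deriv h z)) (at z)"
      by (rule has_field_derivative_transform_within_open[where S="ball 0 1"]) (use z eq in \<open>auto simp: dist_norm\<close>)
    then show ?thesis by (rule DERIV_imp_deriv)
  qed
  have dd: "deriv (deriv w) 0 = 2 * deriv h 0"
  proof -
    have "deriv (deriv w) 0 = deriv (\<lambda>z. h z + z * deriv h z) 0"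
      by (rule deriv_eq_open[where S="ball 0 1"]) (auto simp: dw)
    also have "\<dots> = deriv h 0 + (1 * deriv h 0 + 0 * deriv (deriv h) 0)"
      by (rule DERIV_imp_deriv) (rule derivative_eq_intros dh ddh refl | simp)+
    finally show ?thesis by simp
  qed
  show ?thesis
  proof (cases "norm (h 0) = 1")
    case True
    have "h constant_on ball 0 1"
      by (rule Schwarz2[OF holh, of 1 0]) (use le1 True in auto)
    then obtain c where c: "\<And>z. z \<in> ball 0 1 \<Longrightarrow> h z = c" by (auto simp: constant_on_def)
    have "deriv h 0 = deriv (\<lambda>_. c) 0"
      by (rule deriv_eq_open[where S="ball 0 1"]) (auto simp: c)
    then have "deriv h 0 = 0" by simp
    then show ?thesis using dd d0 True by simp
  next
    case False
    define a where "a = h 0"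
    have a1: "norm a < 1" using False le1[of 0] by (simp add: a_def)
    have hlt: "norm (h z) < 1" if z: "z \<in> ball 0 1" for z
    proof (rule ccontr)
      assume "\<not> norm (h z) < 1"
      then have n1: "norm (h z) = 1" using le1 z by force
      have "h constant_on ball 0 1"
        apply (rule Schwarz2[OF holh, of "1 - norm z" z])
        using z n1 apply (auto simp: ball_subset_ball_iff dist_norm intro!: le1)
        by (smt (verit) norm_minus_commute norm_triangle_ineq2)
      then obtain c where c: "\<And>z. z \<in> ball 0 1 \<Longrightarrow> h z = c" by (auto simp: constant_on_def)
      then show False using z n1 False by simp
    qed
    define k where "k = (\<lambda>z. Moebius_function 0 a (h z))"
    have holk: "k holomorphic_on ball 0 1"
      unfolding k_def
      using holomorphic_on_compose_gen[OF holh Moebius_function_holomorphic[OF a1, of 0]] hlt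
      by (auto simp: o_def image_subset_iff)
    have k0: "k 0 = 0" by (simp add: k_def a_def Moebius_function_eq_zero)
    have klt: "\<And>z. norm z < 1 \<Longrightarrow> norm (k z) < 1"
      unfolding k_def using hlt a1 by (auto intro: Moebius_function_norm_lt_1)
    have ha: "h 0 = a" by (simp add: a_def)
    have e: "cnj a * a = of_real (norm a ^ 2)"
      by (metis complex_norm_square mult.commute)
    have na: "norm a ^ 2 < 1" using a1 by (simp add: abs_square_less_1)
    have nz: "1 - cnj a * a \<noteq> 0"
      unfolding e using na by (metis less_irrefl of_real_1 of_real_eq_iff right_minus_eq)
    have "(k has_field_derivative
       ((deriv h 0 * (1 - cnj a * h 0) - (h 0 - a) * (- (cnj a * deriv h 0))) / (1 - cnj a * h 0)^2)) (at 0)"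
      unfolding k_def Moebius_function_simple
      using nz by (auto intro!: derivative_eq_intros dh simp: ha power2_eq_square)
    then have "deriv k 0 = deriv h 0 / (1 - cnj a * a)"
      using nz by (intro DERIV_imp_deriv) (simp add: ha power2_eq_square)
    moreover have "norm (deriv k 0) \<le> 1" using Schwarz_Lemma(2)[OF holk k0 klt, of 0] by simp
    ultimately have "norm (deriv h 0) \<le> norm (1 - cnj a * a)" using nz
      by (simp add: norm_divide divide_le_eq)
    also have "1 - cnj a * a = of_real (1 - norm a ^ 2)"
      by (simp add: e)
    also have "norm (complex_of_real (1 - norm a ^ 2)) = 1 - norm a ^ 2"
      unfolding norm_of_real using na by simp
    finally show ?thesis using dd d0 by (simp add: a_def norm_mult)
  qed
qed
lemma hasder_comp:
  assumes "h holomorphic_on T" "open T" "k holomorphic_on S" "open S" "k ` S \<subseteq> T" "x \<in> S"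
  shows "((\<lambda>x. h (k x)) has_field_derivative deriv h (k x) * deriv k x) (at x)"
proof -
  have A: "(h has_field_derivative deriv h (k x)) (at (k x))"
    using assms by (auto intro!: holomorphic_derivI)
  have B: "(k has_field_derivative deriv k x) (at x)"
    using assms by (auto intro!: holomorphic_derivI)
  show ?thesis using DERIV_chain2[OF A B] .
qed

lemma hasder_hol:
  assumes "h holomorphic_on T" "open T" "x \<in> T"
  shows "(h has_field_derivative deriv h x) (at x)"
  using assms by (auto intro!: holomorphic_derivI)

lemma deriv_comp_formulas:
  assumes hh: "h holomorphic_on T" and oT: "open T" and hk: "k holomorphic_on S" and oS: "open S"
    and sub: "k ` S \<subseteq> T" and z: "z \<in> S"
  shows "deriv (\<lambda>x. h (k x)) z = deriv h (k z) * deriv k z"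
    and "deriv (deriv (\<lambda>x. h (k x))) z =
          deriv (deriv h) (k z) * (deriv k z)^2 + deriv h (k z) * deriv (deriv k) z"
    and "deriv (deriv (deriv (\<lambda>x. h (k x)))) z =
          deriv (deriv (deriv h)) (k z) * (deriv k z)^3
          + 3 * deriv (deriv h) (k z) * deriv k z * deriv (deriv k) z
          + deriv h (k z) * deriv (deriv (deriv k)) z"
proof -
  have h1: "deriv h holomorphic_on T" using hh oT by (rule holomorphic_deriv)
  have h2: "deriv (deriv h) holomorphic_on T" using h1 oT by (rule holomorphic_deriv)
  have h3: "deriv (deriv (deriv h)) holomorphic_on T" using h2 oT by (rule holomorphic_deriv)
  have k1: "deriv k holomorphic_on S" using hk oS by (rule holomorphic_deriv)
  have k2: "deriv (deriv k) holomorphic_on S" using k1 oS by (rule holomorphic_deriv)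
  have k3: "deriv (deriv (deriv k)) holomorphic_on S" using k2 oS by (rule holomorphic_deriv)
  note C0 = hasder_comp[OF hh oT hk oS sub]
  note C1 = hasder_comp[OF h1 oT hk oS sub]
  note C2 = hasder_comp[OF h2 oT hk oS sub]
  note K1 = hasder_hol[OF hk oS] and K2 = hasder_hol[OF k1 oS] and K3 = hasder_hol[OF k2 oS]
  have D1: "deriv (\<lambda>x. h (k x)) x = deriv h (k x) * deriv k x" if "x \<in> S" for x
    using C0[OF that] by (rule DERIV_imp_deriv)
  then show "deriv (\<lambda>x. h (k x)) z = deriv h (k z) * deriv k z" using z .
  have D2: "deriv (deriv (\<lambda>x. h (k x))) x =
          deriv (deriv h) (k x) * (deriv k x)^2 + deriv h (k x) * deriv (deriv k) x" if x: "x \<in> S" for x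
  proof -
    have "deriv (deriv (\<lambda>x. h (k x))) x = deriv (\<lambda>x. deriv h (k x) * deriv k x) x"
      by (rule deriv_eq_open[OF oS D1 x])
    also have "\<dots> = deriv h (k x) * deriv (deriv k) x + deriv (deriv h) (k x) * deriv k x * deriv k x"
      using DERIV_imp_deriv[OF DERIV_mult'[OF C1[OF x] K2[OF x]]] .
    finally show ?thesis by (simp add: power2_eq_square)
  qed
  then show "deriv (deriv (\<lambda>x. h (k x))) z =
          deriv (deriv h) (k z) * (deriv k z)^2 + deriv h (k z) * deriv (deriv k) z" using z .
  have "deriv (deriv (deriv (\<lambda>x. h (k x)))) z =
      deriv (\<lambda>x. deriv (deriv h) (k x) * (deriv k x * deriv k x) + deriv h (k x) * deriv (deriv k) x) z"
    by (rule deriv_eq_open[OF oS _ z]) (simp add: D2 power2_eq_square)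
  also note DERIV_imp_deriv[OF DERIV_add[OF DERIV_mult'[OF C2[OF z] DERIV_mult'[OF K2[OF z] K2[OF z]]]
       DERIV_mult'[OF C1[OF z] K3[OF z]]]]
  finally show "deriv (deriv (deriv (\<lambda>x. h (k x)))) z =
          deriv (deriv (deriv h)) (k z) * (deriv k z)^3
          + 3 * deriv (deriv h) (k z) * deriv k z * deriv (deriv k) z
          + deriv h (k z) * deriv (deriv (deriv k)) z"
    by (simp add: algebra_simps power3_eq_cube)
qed
lemma G_expr_derivs:
  assumes hf: "f holomorphic_on S" and oS: "open S" and S0: "0 \<in> S" and d1: "deriv f 0 = 1"
  shows "deriv (G_expr lam f) 0 = deriv (deriv f) 0"
    and "deriv (deriv (G_expr lam f)) 0 =
          (1 + of_real lam) * deriv (deriv (deriv f)) 0 - 2 * of_real lam * (deriv (deriv f) 0)^2"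
proof -
  define D1 where "D1 = deriv f"
  define D2 where "D2 = deriv D1"
  define D3 where "D3 = deriv D2"
  define D4 where "D4 = deriv D3"
  define L where "L = (of_real lam :: complex)"
  have h1: "D1 holomorphic_on S" unfolding D1_def using hf oS by (rule holomorphic_deriv)
  have h2: "D2 holomorphic_on S" unfolding D2_def using h1 oS by (rule holomorphic_deriv)
  have h3: "D3 holomorphic_on S" unfolding D3_def using h2 oS by (rule holomorphic_deriv)
  have H1: "\<And>x. x \<in> S \<Longrightarrow> (D1 has_field_derivative D2 x) (at x)"
    unfolding D2_def using h1 oS by (rule hasder_hol)
  have H2: "\<And>x. x \<in> S \<Longrightarrow> (D2 has_field_derivative D3 x) (at x)"
    unfolding D3_def using h2 oS by (rule hasder_hol)
  have H3: "\<And>x. x \<in> S \<Longrightarrow> (D3 has_field_derivative D4 x) (at x)"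
    unfolding D4_def using h3 oS by (rule hasder_hol)
  define S' where "S' = S \<inter> D1 -` (-{0})"
  have oS': "open S'" unfolding S'_def
    by (rule continuous_open_preimage[OF holomorphic_on_imp_continuous_on[OF h1] oS]) auto
  have S'0: "0 \<in> S'" using S0 d1 by (simp add: S'_def D1_def)
  have inS: "\<And>x. x \<in> S' \<Longrightarrow> x \<in> S" and nz: "\<And>x. x \<in> S' \<Longrightarrow> D1 x \<noteq> 0"
    by (auto simp: S'_def)
  have Geq: "G_expr lam f = (\<lambda>z. (1 - L) * D1 z + L * (1 + z * D2 z / D1 z))"
    by (rule ext) (simp add: G_expr_def D1_def D2_def L_def)
  define G1 where "G1 = (\<lambda>z. (1 - L) * D2 z + L * (D2 z / D1 z)
        + L * (z * ((D3 z * D1 z - D2 z * D2 z) / (D1 z * D1 z))))"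
  have dG: "deriv (G_expr lam f) x = G1 x" if x: "x \<in> S'" for x
  proof -
    have "((\<lambda>z. (1 - L) * D1 z + L * (1 + z * D2 z / D1 z)) has_field_derivative G1 x) (at x)"
      using x inS nz[OF x] unfolding G1_def
      by (auto intro!: derivative_eq_intros H1 H2 simp: field_simps power2_eq_square)
    then show ?thesis unfolding Geq by (rule DERIV_imp_deriv)
  qed
  show "deriv (G_expr lam f) 0 = deriv (deriv f) 0"
    using dG[OF S'0] d1 by (simp add: G1_def D2_def D1_def algebra_simps)
  have "deriv (deriv (G_expr lam f)) 0 = deriv G1 0"
    by (rule deriv_eq_open[OF oS' dG S'0])
  also have "\<dots> = (1 - L) * D3 0 + L * ((D3 0 * D1 0 - D2 0 * D2 0) / (D1 0 * D1 0))
        + L * ((D3 0 * D1 0 - D2 0 * D2 0) / (D1 0 * D1 0))"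
  proof (rule DERIV_imp_deriv)
    show "(G1 has_field_derivative (1 - L) * D3 0 + L * ((D3 0 * D1 0 - D2 0 * D2 0) / (D1 0 * D1 0))
        + L * ((D3 0 * D1 0 - D2 0 * D2 0) / (D1 0 * D1 0))) (at 0)"
      using S'0 inS nz[OF S'0] unfolding G1_def
      by (auto intro!: derivative_eq_intros H1 H2 H3 simp: field_simps power2_eq_square)
  qed
  finally show "deriv (deriv (G_expr lam f)) 0 =
          (1 + of_real lam) * deriv (deriv (deriv f)) 0 - 2 * of_real lam * (deriv (deriv f) 0)^2"
    using d1 by (simp add: D1_def[symmetric] D2_def[symmetric] D3_def[symmetric] L_def[symmetric]
        algebra_simps power2_eq_square)
qed


lemma alg_aux:
  fixes B1 t x :: real
  assumes "B1 > 0" "t > 0"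
  shows "B1 * (4 * (1 - (x / B1)^2)) / (12 * t) = B1 / (3 * t) - 4 * (x / 2)^2 / (3 * t * B1)"
  using assms by (simp add: field_simps power2_eq_square)

lemma final_alg:
  fixes F2 F3 U1 U2 V1 V2 :: complex and lam B1 B2 :: real
  assumes l0: "0 \<le> lam" and B1: "B1 > 0"
    and e1: "F2 = of_real B1 * U1"
    and e2: "(1 + of_real lam) * F3 - 2 * of_real lam * F2^2 = 2 * of_real B2 * U1^2 + of_real B1 * U2"
    and e3: "- F2 = of_real B1 * V1"
    and e4: "(1 + of_real lam) * (3 * F2^2 - F3) - 2 * of_real lam * F2^2
              = 2 * of_real B2 * V1^2 + of_real B1 * V2"
    and s1: "norm U2 \<le> 2 * (1 - norm U1 ^ 2)" and s2: "norm V2 \<le> 2 * (1 - norm V1 ^ 2)"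
  shows "norm (F2 / 2) \<le>
           B1 * sqrt B1 / sqrt (4 * B1 + \<bar>(3 - lam) * B1^2 - 4 * B2\<bar>) \<and>
         norm (F3 / 6) \<le>
           (if B1 \<ge> 4 / (3 * (1 + lam))
            then (1 - 4 / (3 * (1 + lam) * B1)) * B1^3 / (4 * B1 + \<bar>(3 - lam) * B1^2 - 4 * B2\<bar>)
                 + B1 / (3 * (1 + lam))
            else B1 / (3 * (1 + lam)))"
proof -
  define L where "L = (of_real lam :: complex)"
  define b where "b = (of_real B1 :: complex)"
  define K where "K = (3 - lam) * B1^2 - 4 * B2"
  define D where "D = 4 * B1 + \<bar>K\<bar>"
  have b0: "b \<noteq> 0" using B1 by (simp add: b_def)
  have V1: "V1 = - U1" using e1 e3 b0 unfolding b_def[symmetric]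
    by (metis minus_mult_right mult_cancel_left)
  have nU1: "norm U1 = norm F2 / B1" using e1 B1 by (simp add: norm_mult)
  have sum: "(3 - L) * F2^2 = 4 * of_real B2 * U1^2 + b * (U2 + V2)"
  proof -
    have "(3 - L) * F2^2 = ((1 + L) * F3 - 2 * L * F2^2) + ((1 + L) * (3 * F2^2 - F3) - 2 * L * F2^2)"
      by (simp add: algebra_simps)
    also have "\<dots> = (2 * of_real B2 * U1^2 + b * U2) + (2 * of_real B2 * V1^2 + b * V2)"
      using e2 e4 by (simp add: L_def b_def)
    finally show ?thesis by (simp add: V1 algebra_simps)
  qed
  have key: "F2^2 * of_real K = b^3 * (U2 + V2)"
  proof -
    have "F2^2 * of_real K = (3 - L) * F2^2 * b^2 - 4 * of_real B2 * (b * U1)^2"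
      by (simp add: K_def L_def b_def e1 algebra_simps power2_eq_square)
    also have "\<dots> = b^3 * (U2 + V2)" using sum by (simp add: algebra_simps power2_eq_square power3_eq_cube)
    finally show ?thesis .
  qed
  have nUV: "norm (U2 + V2) \<le> 4 * (1 - norm U1 ^ 2)"
    using norm_triangle_ineq[of U2 V2] s1 s2 by (simp add: V1)
  have "norm F2 ^ 2 * \<bar>K\<bar> = B1^3 * norm (U2 + V2)"
    using arg_cong[OF key, of norm] B1 by (simp add: norm_mult norm_power b_def)
  also have "\<dots> \<le> B1^3 * (4 * (1 - norm U1 ^ 2))"
    using nUV B1 by (intro mult_left_mono) auto
  also have "\<dots> = 4 * B1^3 - 4 * B1 * norm F2 ^ 2"
    using B1 by (simp add: nU1 field_simps power2_eq_square power3_eq_cube)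
  finally have A: "norm F2 ^ 2 * D \<le> 4 * B1^3" by (simp add: D_def algebra_simps)
  have Dpos: "D > 0" using B1 by (simp add: D_def)
  define a where "a = norm (F2 / 2)"
  have a2: "a^2 \<le> B1^3 / D"
    using A Dpos by (simp add: a_def norm_divide field_simps power2_eq_square)
  have a0: "a \<ge> 0" by (simp add: a_def)
  have part1: "a \<le> B1 * sqrt B1 / sqrt D"
  proof -
    have "a = sqrt (a^2)" using a0 by simp
    also have "\<dots> \<le> sqrt (B1^3 / D)" using a2 by (rule real_sqrt_le_mono)
    also have "\<dots> = B1 * sqrt B1 / sqrt D"
      using B1 Dpos by (simp add: real_sqrt_divide real_sqrt_mult power3_eq_cube)
    finally show ?thesis .
  qed
  have diff: "F3 / 6 = F2^2 / 4 + b * (U2 - V2) / (12 * (1 + L))"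
  proof -
    have L1: "1 + L \<noteq> 0" using l0 unfolding L_def
      by (metis add_nonneg_nonneg le_add_same_cancel1 not_one_le_zero of_real_1 of_real_add of_real_eq_0_iff zero_le_one)
    have "2 * (1 + L) * F3 - 3 * (1 + L) * F2^2 = ((1 + L) * F3 - 2 * L * F2^2) - ((1 + L) * (3 * F2^2 - F3) - 2 * L * F2^2)"
      by (simp add: algebra_simps)
    also have "\<dots> = b * (U2 - V2)"
      using e2 e4 by (simp add: L_def b_def V1 algebra_simps)
    finally have "2 * (1 + L) * F3 - 3 * (1 + L) * F2^2 = b * (U2 - V2)" .
    moreover have "Re (12 + L * 12) > 0" "Re (2 + L * 2) > 0" "Re (48 + L * 48) > 0" using l0 by (simp_all add: L_def)
    then have L12: "12 + L * 12 \<noteq> 0" "2 + L * 2 \<noteq> 0" "48 + L * 48 \<noteq> 0" by (metis less_irrefl zero_complex.sel(1))+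
    ultimately have eq: "F3 = (3 * (1 + L) * F2^2 + b * (U2 - V2)) / (2 * (1 + L))"
      by (simp add: field_simps)
    show ?thesis unfolding eq using L1 L12 by (simp add: field_simps)
  qed
  have nUV2: "norm (U2 - V2) \<le> 4 * (1 - norm U1 ^ 2)"
    using norm_triangle_ineq4[of U2 V2] s1 s2 by (simp add: V1)
  have nL: "norm (12 * (1 + L)) = 12 * (1 + lam)" using l0 unfolding L_def
    by (metis abs_of_nonneg add_nonneg_nonneg norm_mult norm_numeral norm_of_real of_real_1 of_real_add zero_le_one)
  have "norm (F3 / 6) \<le> norm (F2^2 / 4) + norm (b * (U2 - V2) / (12 * (1 + L)))"
    unfolding diff by (rule norm_triangle_ineq)
  also have "norm (F2^2 / 4) = a^2" by (simp add: a_def norm_divide norm_power power2_eq_square norm_mult)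
  also have "norm (b * (U2 - V2) / (12 * (1 + L))) = B1 * norm (U2 - V2) / (12 * (1 + lam))"
    using B1 by (simp only: norm_divide nL) (simp add: norm_mult b_def)
  also have "\<dots> \<le> B1 * (4 * (1 - norm U1 ^ 2)) / (12 * (1 + lam))"
    using nUV2 B1 l0 by (intro divide_right_mono mult_left_mono) auto
  also have "B1 * (4 * (1 - norm U1 ^ 2)) / (12 * (1 + lam)) = B1 / (3 * (1 + lam)) - 4 * a^2 / (3 * (1 + lam) * B1)"
    using alg_aux[OF B1, of "1 + lam" "norm F2"] l0 by (simp add: nU1 a_def norm_divide)
  finally have A3: "norm (F3 / 6) \<le> a^2 * (1 - 4 / (3 * (1 + lam) * B1)) + B1 / (3 * (1 + lam))"
    by (simp add: algebra_simps)
  have part2: "norm (F3 / 6) \<le>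
           (if B1 \<ge> 4 / (3 * (1 + lam))
            then (1 - 4 / (3 * (1 + lam) * B1)) * B1^3 / D + B1 / (3 * (1 + lam))
            else B1 / (3 * (1 + lam)))"
  proof (cases "B1 \<ge> 4 / (3 * (1 + lam))")
    case True
    then have c: "1 - 4 / (3 * (1 + lam) * B1) \<ge> 0" using B1 l0
      by (simp add: field_simps)
    have "a^2 * (1 - 4 / (3 * (1 + lam) * B1)) \<le> B1^3 / D * (1 - 4 / (3 * (1 + lam) * B1))"
      using a2 c by (rule mult_right_mono)
    then have "norm (F3 / 6) \<le> B1^3 / D * (1 - 4 / (3 * (1 + lam) * B1)) + B1 / (3 * (1 + lam))"
      using A3 by linarith
    moreover have "(1 - 4 / (3 * (1 + lam) * B1)) * B1^3 / D = B1^3 / D * (1 - 4 / (3 * (1 + lam) * B1))"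
      by simp
    ultimately show ?thesis using True by (simp only: if_P[OF True] if_True)
  next
    case False
    have dp: "3 * (1 + lam) * B1 > 0" using B1 l0 by simp
    have "B1 < 4 / (3 * (1 + lam))" using False by simp
    then have "B1 * (3 * (1 + lam)) < 4" using l0 by (simp add: field_simps)
    then have "1 < 4 / (3 * (1 + lam) * B1)" using dp by (simp add: field_simps)
    then have c: "1 - 4 / (3 * (1 + lam) * B1) < 0" by simp
    have "a^2 * (1 - 4 / (3 * (1 + lam) * B1)) \<le> 0"
      using c by (simp add: mult_nonneg_nonpos)
    then have "norm (F3 / 6) \<le> B1 / (3 * (1 + lam))" using A3 by linarith
    then show ?thesis using False by (simp only: if_not_P[OF False] if_False)
  qed
  show ?thesis using part1 part2 unfolding a_def D_def K_def by simp
qed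

lemma ident_derivs:
  assumes oW: "open W" and eq: "\<And>x. x \<in> W \<Longrightarrow> F x = x" and z: "z \<in> W"
  shows "deriv F z = 1" "deriv (deriv F) z = 0" "deriv (deriv (deriv F)) z = 0"
proof -
  have d1: "deriv F x = 1" if "x \<in> W" for x
  proof -
    have "deriv F x = deriv (\<lambda>x. x) x" by (rule deriv_eq_open[OF oW eq that])
    then show ?thesis by simp
  qed
  then show "deriv F z = 1" using z .
  have d2: "deriv (deriv F) x = 0" if "x \<in> W" for x
  proof -
    have "deriv (deriv F) x = deriv (\<lambda>x. 1) x" by (rule deriv_eq_open[OF oW d1 that])
    then show ?thesis by simp
  qed
  then show "deriv (deriv F) z = 0" using z .
  have "deriv (deriv (deriv F)) z = deriv (\<lambda>x. 0) z" by (rule deriv_eq_open[OF oW d2 z])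
  then show "deriv (deriv (deriv F)) z = 0" by simp
qed

lemma subord_eqs:
  assumes holphi: "\<phi> holomorphic_on ball 0 1"
    and holu: "u holomorphic_on ball 0 1" and u0: "u 0 = 0" and ult: "\<forall>z\<in>ball 0 1. norm (u z) < 1"
    and eq: "\<forall>z\<in>ball 0 1. G z = \<phi> (u z)"
  shows "deriv G 0 = deriv \<phi> 0 * deriv u 0"
    and "deriv (deriv G) 0 = deriv (deriv \<phi>) 0 * (deriv u 0)^2 + deriv \<phi> 0 * deriv (deriv u) 0"
proof -
  have sub: "u ` ball 0 1 \<subseteq> ball 0 1" using ult by auto
  note F = deriv_comp_formulas[OF holphi open_ball holu open_ball sub]
  have e1: "deriv G x = deriv (\<lambda>x. \<phi> (u x)) x" if "x \<in> ball 0 1" for x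
    by (rule deriv_eq_open[OF open_ball _ that]) (use eq in auto)
  show "deriv G 0 = deriv \<phi> 0 * deriv u 0" using e1[of 0] F(1)[of 0] u0 by simp
  have "deriv (deriv G) 0 = deriv (deriv (\<lambda>x. \<phi> (u x))) 0"
    by (rule deriv_eq_open[where S="ball 0 1", OF open_ball e1]) auto
  then show "deriv (deriv G) 0 = deriv (deriv \<phi>) 0 * (deriv u 0)^2 + deriv \<phi> 0 * deriv (deriv u) 0"
    using F(2)[of 0] u0 by simp
qed

theorem theorem2p1:
  fixes lam :: real and \<phi> f :: "complex \<Rightarrow> complex"
  assumes "0 \<le> lam" and "lam \<le> 1"
    and "admissible_phi \<phi>"
    and "f \<in> class_G lam \<phi>"
  defines "B1 \<equiv> Re (taylor_coeff \<phi> 1)" and "B2 \<equiv> Re (taylor_coeff \<phi> 2)"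
  shows "norm (taylor_coeff f 2) \<le>
           B1 * sqrt B1 / sqrt (4 * B1 + \<bar>(3 - lam) * B1^2 - 4 * B2\<bar>) \<and>
         norm (taylor_coeff f 3) \<le>
           (if B1 \<ge> 4 / (3 * (1 + lam))
            then (1 - 4 / (3 * (1 + lam) * B1)) * B1^3 / (4 * B1 + \<bar>(3 - lam) * B1^2 - 4 * B2\<bar>)
                 + B1 / (3 * (1 + lam))
            else B1 / (3 * (1 + lam)))"
proof -
  note ad = assms(3)[unfolded admissible_phi_def unit_disc_def]
  have holphi: "\<phi> holomorphic_on ball 0 1" using ad by blast
  have tc1: "taylor_coeff \<phi> 1 = deriv \<phi> 0" by (simp add: taylor_coeff_def)
  have tc2: "taylor_coeff \<phi> 2 = deriv (deriv \<phi>) 0 / 2" by (simp add: taylor_coeff_def numeral_2_eq_2)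
  have B1pos: "B1 > 0" unfolding B1_def tc1 using ad by simp
  have dphi: "deriv \<phi> 0 = of_real B1" unfolding B1_def tc1 using ad by (simp add: complex_eq_iff)
  have "Im (taylor_coeff \<phi> 2) = 0" using ad by blast
  then have "taylor_coeff \<phi> 2 = of_real B2" by (simp add: B2_def complex_eq_iff)
  then have ddphi: "deriv (deriv \<phi>) 0 = 2 * of_real B2" by (simp add: tc2)
  note fG = assms(4)[unfolded class_G_def bi_univalent_def unit_disc_def, simplified]
  have holf: "f holomorphic_on ball 0 1" and f0: "f 0 = 0" and df0: "deriv f 0 = 1"
    using fG by auto
  obtain g where ig: "inverse_ext f g" using fG by blast
  obtain u where holu: "u holomorphic_on ball 0 1" and u0: "u 0 = 0"
      and ult: "\<forall>z\<in>ball 0 1. norm (u z) < 1" and ueq: "\<forall>z\<in>ball 0 1. G_expr lam f z = \<phi> (u z)"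
    using fG by (auto simp: subordinate_def unit_disc_def)
  have "subordinate (G_expr lam g) \<phi>" using fG ig by blast
  then obtain v where holv: "v holomorphic_on ball 0 1" and v0: "v 0 = 0"
      and vlt: "\<forall>z\<in>ball 0 1. norm (v z) < 1" and veq: "\<forall>z\<in>ball 0 1. G_expr lam g z = \<phi> (v z)"
    by (auto simp: subordinate_def unit_disc_def)
  have holg: "g holomorphic_on ball 0 1" using ig by (simp add: inverse_ext_def unit_disc_def)
  have "eventually (\<lambda>z. g (f z) = z) (nhds 0)" using ig by (simp add: inverse_ext_def)
  then obtain W where oW: "open W" and W0: "0 \<in> W" and Weq: "\<And>z. z \<in> W \<Longrightarrow> g (f z) = z"
    unfolding eventually_nhds by blast
  define W' where "W' = (ball 0 1 \<inter> f -` ball 0 1) \<inter> W"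
  have oW': "open W'" unfolding W'_def
    by (intro open_Int oW continuous_open_preimage holomorphic_on_imp_continuous_on[OF holf] open_ball)
  have W'0: "0 \<in> W'" using W0 f0 by (simp add: W'_def)
  have holf': "f holomorphic_on W'" using holf by (rule holomorphic_on_subset) (auto simp: W'_def)
  have subf: "f ` W' \<subseteq> ball 0 1" by (auto simp: W'_def)
  note GF = deriv_comp_formulas[OF holg open_ball holf' oW' subf W'0]
  note ID = ident_derivs[OF oW' _ W'0, of "\<lambda>x. g (f x)"]
  have idW: "\<And>x. x \<in> W' \<Longrightarrow> g (f x) = x" using Weq by (auto simp: W'_def)
  have g0: "g 0 = 0" using Weq[OF W0] f0 by simp
  define F2 where "F2 = deriv (deriv f) 0"
  define F3 where "F3 = deriv (deriv (deriv f)) 0"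
  have dg0: "deriv g 0 = 1" using GF(1) ID(1)[OF idW] f0 g0 df0 by simp
  have ddg0: "deriv (deriv g) 0 = - F2"
    using GF(2) ID(2)[OF idW] f0 df0 dg0 by (simp add: F2_def add_eq_0_iff)
  have dddg0: "deriv (deriv (deriv g)) 0 = 3 * F2^2 - F3"
  proof -
    have "deriv (deriv (deriv g)) 0 + 3 * (- F2) * F2 + F3 = 0"
      using GF(3) ID(3)[OF idW] f0 df0 dg0 ddg0 by (simp add: F2_def F3_def)
    then show ?thesis by (simp add: power2_eq_square algebra_simps eq_diff_eq add_eq_0_iff)
  qed
  note GEf = G_expr_derivs[OF holf open_ball _ df0, of lam, simplified]
  note GEg = G_expr_derivs[OF holg open_ball _ dg0, of lam, simplified]
  note SUf = subord_eqs[OF holphi holu u0 ult ueq]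
  note SUg = subord_eqs[OF holphi holv v0 vlt veq]
  have e1: "F2 = of_real B1 * deriv u 0" using GEf(1) SUf(1) dphi by (simp add: F2_def)
  have e2: "(1 + of_real lam) * F3 - 2 * of_real lam * F2^2
      = 2 * of_real B2 * (deriv u 0)^2 + of_real B1 * deriv (deriv u) 0"
    using GEf(2) SUf(2) dphi ddphi by (simp add: F2_def F3_def)
  have e3: "- F2 = of_real B1 * deriv v 0" using GEg(1) SUg(1) dphi ddg0 by simp
  have e4: "(1 + of_real lam) * (3 * F2^2 - F3) - 2 * of_real lam * F2^2
      = 2 * of_real B2 * (deriv v 0)^2 + of_real B1 * deriv (deriv v) 0"
    using GEg(2) SUg(2) dphi ddphi dddg0 ddg0 by simp
  have s1: "norm (deriv (deriv u) 0) \<le> 2 * (1 - norm (deriv u 0) ^ 2)"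
    using schwarz_coeff[OF holu u0] ult by blast
  have s2: "norm (deriv (deriv v) 0) \<le> 2 * (1 - norm (deriv v 0) ^ 2)"
    using schwarz_coeff[OF holv v0] vlt by blast
  have t2: "taylor_coeff f 2 = F2 / 2" by (simp add: taylor_coeff_def F2_def numeral_2_eq_2)
  have t3: "taylor_coeff f 3 = F3 / 6" by (simp add: taylor_coeff_def F3_def numeral_3_eq_3)
  show ?thesis unfolding t2 t3
    by (rule final_alg[OF assms(1) B1pos e1 e2 e3 e4 s1 s2])
qed

end
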